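(* Let $t\ge 2$ and let $\mathcal{P}_t$ be the semilattice on $\{0,1,\dots,t\}$ in which $0$ is the greatest element and $1,\dots,t$ are pairwise incomparable (so $i+j=0$ for $i\ne j$ and $i+i=i$). Let $\operatorname{End}^0(\mathcal{P}_t)$ be the set of endomorphisms of $\mathcal{P}_t$ fixing $0$. Then $\operatorname{End}^0(\mathcal{P}_t)$ is a subsemiring of $\operatorname{End}(\mathcal{P}_t)$, this subsemiring is isomorphic to the rook semiring $\mathcal{R}_t$, and every endomorphism in $\operatorname{End}(\mathcal{P}_t)\setminus\operatorname{End}^0(\mathcal{P}_t)$ is a constant map.
   Context: For a semilattice $\mathcal{A}=(A,+)$, $\operatorname{End}(\mathcal{A})$ is the semiring of all maps $\alpha:A\to A$ with $(a+b)\alpha=a\alpha+b\alpha$, under pointwise addition and composition (maps written on the right, $a(\alpha\beta)=(a\alpha)\beta$). A $t\times t$ rook matrix is a $0$-$1$ matrix with at most one entry $1$ in each row and each column. The rook semiring $\mathcal{R}_t$ is the set $R_t$ of all $t\times t$ rook matrices with addition the entrywise (Hadamard) product $a+b=(a_{ij}b_{ij})$ and multiplication the usual matrix product. *)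

theory Defs
  imports "HOL-Library.FuncSet"
begin

definition Pt_carrier :: "nat \<Rightarrow> nat set" where
  "Pt_carrier t = {0..t}"

definition Pt_add :: "nat \<Rightarrow> nat \<Rightarrow> nat" where
  "Pt_add i j = (if i = j then i else 0)"

definition End_Pt :: "nat \<Rightarrow> (nat \<Rightarrow> nat) set" where
  "End_Pt t = {\<alpha> \<in> Pt_carrier t \<rightarrow>\<^sub>E Pt_carrier t.
      \<forall>a\<in>Pt_carrier t. \<forall>b\<in>Pt_carrier t. \<alpha> (Pt_add a b) = Pt_add (\<alpha> a) (\<alpha> b)}"

definition End0_Pt :: "nat \<Rightarrow> (nat \<Rightarrow> nat) set" where
  "End0_Pt t = {\<alpha> \<in> End_Pt t. \<alpha> 0 = 0}"

text \<open>Pointwise addition and composition with maps written on the right: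
  a(\<alpha>\<beta>) = (a\<alpha>)\<beta>.\<close>
definition End_add :: "nat \<Rightarrow> (nat \<Rightarrow> nat) \<Rightarrow> (nat \<Rightarrow> nat) \<Rightarrow> (nat \<Rightarrow> nat)" where
  "End_add t \<alpha> \<beta> = (\<lambda>a\<in>Pt_carrier t. Pt_add (\<alpha> a) (\<beta> a))"

definition End_mult :: "nat \<Rightarrow> (nat \<Rightarrow> nat) \<Rightarrow> (nat \<Rightarrow> nat) \<Rightarrow> (nat \<Rightarrow> nat)" where
  "End_mult t \<alpha> \<beta> = (\<lambda>a\<in>Pt_carrier t. \<beta> (\<alpha> a))"

type_synonym mat = "nat \<Rightarrow> nat \<Rightarrow> nat"

definition rook :: "nat \<Rightarrow> mat set" where
  "rook t = {M. (\<forall>i j. M i j \<in> {0, 1})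
      \<and> (\<forall>i j. (i \<notin> {1..t} \<or> j \<notin> {1..t}) \<longrightarrow> M i j = 0)
      \<and> (\<forall>i\<in>{1..t}. card {j\<in>{1..t}. M i j = 1} \<le> 1)
      \<and> (\<forall>j\<in>{1..t}. card {i\<in>{1..t}. M i j = 1} \<le> 1)}"

definition rook_add :: "mat \<Rightarrow> mat \<Rightarrow> mat" where
  "rook_add A B = (\<lambda>i j. A i j * B i j)"

definition rook_mult :: "nat \<Rightarrow> mat \<Rightarrow> mat \<Rightarrow> mat" where
  "rook_mult t A B = (\<lambda>i j. \<Sum>k\<in>{1..t}. A i k * B k j)"

end

theory Submission
  imports Defs
begin

lemma End0_char:
  "\<alpha> \<in> End0_Pt t \<longleftrightarrow> \<alpha> \<in> {0..t} \<rightarrow>\<^sub>E {0..t} \<and> \<alpha> 0 = 0 \<and>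
     (\<forall>a\<in>{1..t}. \<forall>b\<in>{1..t}. a \<noteq> b \<longrightarrow> \<alpha> a = \<alpha> b \<longrightarrow> \<alpha> a = 0)"
proof
  assume h: "\<alpha> \<in> End0_Pt t"
  then have A: "\<alpha> \<in> {0..t} \<rightarrow>\<^sub>E {0..t}" "\<alpha> 0 = 0"
    and B: "\<forall>a\<in>{0..t}. \<forall>b\<in>{0..t}. \<alpha> (Pt_add a b) = Pt_add (\<alpha> a) (\<alpha> b)"
    by (auto simp: End0_Pt_def End_Pt_def Pt_carrier_def)
  have "\<alpha> a = 0" if "a\<in>{1..t}" "b\<in>{1..t}" "a \<noteq> b" "\<alpha> a = \<alpha> b" for a b
    using B[rule_format, of a b] that A(2) by (auto simp: Pt_add_def)
  then show "\<alpha> \<in> {0..t} \<rightarrow>\<^sub>E {0..t} \<and> \<alpha> 0 = 0 \<and>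
     (\<forall>a\<in>{1..t}. \<forall>b\<in>{1..t}. a \<noteq> b \<longrightarrow> \<alpha> a = \<alpha> b \<longrightarrow> \<alpha> a = 0)"
    using A by blast
next
  assume h: "\<alpha> \<in> {0..t} \<rightarrow>\<^sub>E {0..t} \<and> \<alpha> 0 = 0 \<and>
     (\<forall>a\<in>{1..t}. \<forall>b\<in>{1..t}. a \<noteq> b \<longrightarrow> \<alpha> a = \<alpha> b \<longrightarrow> \<alpha> a = 0)"
  have "\<alpha> (Pt_add a b) = Pt_add (\<alpha> a) (\<alpha> b)" if "a\<in>{0..t}" "b\<in>{0..t}" for a b
  proof (cases "a = b")
    case True then show ?thesis by (simp add: Pt_add_def)
  next
    case False
    then show ?thesis
    proof (cases "a = 0 \<or> b = 0")
      case True then show ?thesis using h False by (auto simp: Pt_add_def)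
    next
      case F: False
      then have "a \<in> {1..t}" "b \<in> {1..t}" using that by auto
      then show ?thesis using h False by (auto simp: Pt_add_def)
    qed
  qed
  then show "\<alpha> \<in> End0_Pt t" using h
    by (auto simp: End0_Pt_def End_Pt_def Pt_carrier_def)
qed

definition toM :: "nat \<Rightarrow> (nat \<Rightarrow> nat) \<Rightarrow> mat" where
  "toM t \<alpha> = (\<lambda>i j. if i \<in> {1..t} \<and> j \<in> {1..t} \<and> \<alpha> i = j then 1 else 0)"

definition ofM :: "nat \<Rightarrow> mat \<Rightarrow> (nat \<Rightarrow> nat)" where
  "ofM t M = (\<lambda>a\<in>{0..t}. if \<exists>j\<in>{1..t}. M a j = 1 then (THE j. j\<in>{1..t} \<and> M a j = 1) else 0)"

lemma card_le1: "finite A \<Longrightarrow> card A \<le> 1 \<longleftrightarrow> (\<forall>x\<in>A. \<forall>y\<in>A. x = y)"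
  using card_le_Suc0_iff_eq by auto

lemma toM_one: "toM t \<alpha> i j = 1 \<longleftrightarrow> i \<in> {1..t} \<and> j \<in> {1..t} \<and> \<alpha> i = j"
  by (simp add: toM_def)

lemma toM_01: "toM t \<alpha> i j \<in> {0, 1}"
  by (simp add: toM_def)

lemma toM_rook:
  assumes "\<alpha> \<in> End0_Pt t" shows "toM t \<alpha> \<in> rook t"
proof -
  have c: "\<forall>a\<in>{1..t}. \<forall>b\<in>{1..t}. a \<noteq> b \<longrightarrow> \<alpha> a = \<alpha> b \<longrightarrow> \<alpha> a = 0"
    using assms End0_char by blast
  have r: "card {j\<in>{1..t}. toM t \<alpha> i j = 1} \<le> 1" for i
  proof (subst card_le1)
    show "finite {j\<in>{1..t}. toM t \<alpha> i j = 1}" by simp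
    show "\<forall>x\<in>{j\<in>{1..t}. toM t \<alpha> i j = 1}. \<forall>y\<in>{j\<in>{1..t}. toM t \<alpha> i j = 1}. x = y"
      unfolding toM_one by blast
  qed
  have co: "card {i\<in>{1..t}. toM t \<alpha> i j = 1} \<le> 1" for j
  proof (subst card_le1)
    show "finite {i\<in>{1..t}. toM t \<alpha> i j = 1}" by simp
    show "\<forall>x\<in>{i\<in>{1..t}. toM t \<alpha> i j = 1}. \<forall>y\<in>{i\<in>{1..t}. toM t \<alpha> i j = 1}. x = y"
    proof (intro ballI)
      fix x y assume "x \<in> {i\<in>{1..t}. toM t \<alpha> i j = 1}" "y \<in> {i\<in>{1..t}. toM t \<alpha> i j = 1}"
      then have h: "x \<in> {1..t}" "y \<in> {1..t}" "j \<in> {1..t}" "\<alpha> x = j" "\<alpha> y = j"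
        unfolding toM_one by auto
      show "x = y"
      proof (rule ccontr)
        assume "x \<noteq> y"
        then have "\<alpha> x = 0" using c h by metis
        then show False using h by simp
      qed
    qed
  qed
  have z: "toM t \<alpha> i j = 0" if "i \<notin> {1..t} \<or> j \<notin> {1..t}" for i j
    using that by (auto simp: toM_def)
  show ?thesis unfolding rook_def mem_Collect_eq
    using r co z toM_01 by blast
qed

lemma rook_D:
  assumes "M \<in> rook t"
  shows "\<And>i j. M i j \<in> {0, 1}"
    "\<And>i j. (i \<notin> {1..t} \<or> j \<notin> {1..t}) \<Longrightarrow> M i j = 0"
    "\<And>i. i\<in>{1..t} \<Longrightarrow> card {j\<in>{1..t}. M i j = 1} \<le> 1"
    "\<And>j. j\<in>{1..t} \<Longrightarrow> card {i\<in>{1..t}. M i j = 1} \<le> 1"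
proof -
  have "(\<forall>i j. M i j \<in> {0, 1})
      \<and> (\<forall>i j. (i \<notin> {1..t} \<or> j \<notin> {1..t}) \<longrightarrow> M i j = 0)
      \<and> (\<forall>i\<in>{1..t}. card {j\<in>{1..t}. M i j = 1} \<le> 1)
      \<and> (\<forall>j\<in>{1..t}. card {i\<in>{1..t}. M i j = 1} \<le> 1)"
    using assms unfolding rook_def by (rule CollectD)
  then show "\<And>i j. M i j \<in> {0, 1}"
    "\<And>i j. (i \<notin> {1..t} \<or> j \<notin> {1..t}) \<Longrightarrow> M i j = 0"
    "\<And>i. i\<in>{1..t} \<Longrightarrow> card {j\<in>{1..t}. M i j = 1} \<le> 1"
    "\<And>j. j\<in>{1..t} \<Longrightarrow> card {i\<in>{1..t}. M i j = 1} \<le> 1"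
    by blast+
qed

lemma rook_row:
  assumes "M \<in> rook t" "i \<in> {1..t}" "j \<in> {1..t}" "k \<in> {1..t}" "M i j = 1" "M i k = 1"
  shows "j = k"
proof -
  have "card {j\<in>{1..t}. M i j = 1} \<le> 1" using rook_D(3)[OF assms(1,2)] .
  then have "\<forall>x\<in>{j\<in>{1..t}. M i j = 1}. \<forall>y\<in>{j\<in>{1..t}. M i j = 1}. x = y"
    by (subst (asm) card_le1) simp_all
  then show ?thesis using assms(3-) by blast
qed

lemma rook_col:
  assumes "M \<in> rook t" "i \<in> {1..t}" "j \<in> {1..t}" "k \<in> {1..t}" "M j i = 1" "M k i = 1"
  shows "j = k"
proof -
  have "card {j\<in>{1..t}. M j i = 1} \<le> 1" using rook_D(4)[OF assms(1,2)] .
  then have "\<forall>x\<in>{j\<in>{1..t}. M j i = 1}. \<forall>y\<in>{j\<in>{1..t}. M j i = 1}. x = y"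
    by (subst (asm) card_le1) simp_all
  then show ?thesis using assms(3-) by blast
qed

lemma rook_01: "M \<in> rook t \<Longrightarrow> M i j = 0 \<or> M i j = 1"
  using rook_D(1) by blast

lemma rook_out: "M \<in> rook t \<Longrightarrow> M i j = 1 \<Longrightarrow> i \<in> {1..t} \<and> j \<in> {1..t}"
  using rook_D(2) by (metis zero_neq_one)

lemma ofM_val:
  assumes "M \<in> rook t" "a \<in> {0..t}" "j \<in> {1..t}" "M a j = 1"
  shows "ofM t M a = j"
proof -
  have "(THE j. j\<in>{1..t} \<and> M a j = 1) = j"
  proof (rule the_equality)
    show "j\<in>{1..t} \<and> M a j = 1" using assms(3,4) by simp
    fix k assume k: "k\<in>{1..t} \<and> M a k = 1"
    have a1: "a \<in> {1..t}" using rook_out[OF assms(1,4)] by simp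
    show "k = j" using rook_row[OF assms(1) a1 _ assms(3)] k assms(4) by simp
  qed
  moreover have "\<exists>j\<in>{1..t}. M a j = 1" using assms(3,4) by blast
  ultimately show ?thesis using assms(2) unfolding ofM_def by simp
qed

lemma ofM_zero:
  assumes "a \<in> {0..t}" "\<forall>j\<in>{1..t}. M a j \<noteq> 1"
  shows "ofM t M a = 0"
  using assms by (auto simp: ofM_def)

lemma ofM_cases:
  assumes "M \<in> rook t" "a \<in> {0..t}"
  shows "(ofM t M a = 0 \<and> (\<forall>j\<in>{1..t}. M a j \<noteq> 1)) \<or> (ofM t M a \<in> {1..t} \<and> M a (ofM t M a) = 1)"
proof (cases "\<exists>j\<in>{1..t}. M a j = 1")
  case True
  then obtain j where "j\<in>{1..t}" "M a j = 1" by blast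
  then show ?thesis using ofM_val[OF assms] by auto
next
  case False then show ?thesis using ofM_zero[OF assms(2)] by auto
qed

lemma ofM_End0:
  assumes "M \<in> rook t" shows "ofM t M \<in> End0_Pt t"
proof -
  have "ofM t M \<in> {0..t} \<rightarrow>\<^sub>E {0..t}"
  proof
    fix a assume "a \<in> {0..t}" then show "ofM t M a \<in> {0..t}"
      using ofM_cases[OF assms, of a] by auto
  next
    fix a assume "a \<notin> {0..t}" then show "ofM t M a = undefined" by (simp add: ofM_def)
  qed
  moreover have "ofM t M 0 = 0"
  proof (rule ofM_zero)
    show "0 \<in> {0..t}" by simp
    show "\<forall>j\<in>{1..t}. M 0 j \<noteq> 1" using rook_out[OF assms, of 0] by auto
  qed
  moreover have "ofM t M a = 0" if "a\<in>{1..t}" "b\<in>{1..t}" "a \<noteq> b" "ofM t M a = ofM t M b" for a b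
  proof (rule ccontr)
    assume n: "ofM t M a \<noteq> 0"
    have "a \<in> {0..t}" "b \<in> {0..t}" using that by auto
    then have "M a (ofM t M a) = 1" "M b (ofM t M a) = 1" "ofM t M a \<in> {1..t}"
      using ofM_cases[OF assms, of a] ofM_cases[OF assms, of b] n that(4) by auto
    then show False using rook_col[OF assms _ that(1,2)] that(3) by blast
  qed
  ultimately show ?thesis by (simp add: End0_char)
qed

lemma toM_ofM: assumes "M \<in> rook t" shows "toM t (ofM t M) = M"
proof (intro ext)
  fix i j
  show "toM t (ofM t M) i j = M i j"
  proof (cases "M i j = 1")
    case True
    then have ij: "i \<in> {1..t}" "j \<in> {1..t}" using rook_out[OF assms] by auto
    then have "ofM t M i = j" using ofM_val[OF assms _ _ True] by simp
    then have "toM t (ofM t M) i j = 1" unfolding toM_one using ij by simp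
    then show ?thesis using True by simp
  next
    case False
    then have M0: "M i j = 0" using rook_01[OF assms] by blast
    have "toM t (ofM t M) i j \<noteq> 1"
    proof
      assume "toM t (ofM t M) i j = 1"
      then have h: "i \<in> {1..t}" "j \<in> {1..t}" "ofM t M i = j" unfolding toM_one by auto
      then have "i \<in> {0..t}" by simp
      from ofM_cases[OF assms this] h False show False by auto
    qed
    then show ?thesis using M0 toM_01[of t "ofM t M" i j] by simp
  qed
qed

lemma toM_inj: "inj_on (toM t) (End0_Pt t)"
proof (rule inj_onI)
  fix \<alpha> \<beta> assume a: "\<alpha> \<in> End0_Pt t" "\<beta> \<in> End0_Pt t" and e: "toM t \<alpha> = toM t \<beta>"
  have A: "\<alpha> \<in> {0..t} \<rightarrow>\<^sub>E {0..t}" "\<alpha> 0 = 0" "\<beta> \<in> {0..t} \<rightarrow>\<^sub>E {0..t}" "\<beta> 0 = 0"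
    using a End0_char by blast+
  have E: "\<alpha> \<in> extensional {0..t}" "\<beta> \<in> extensional {0..t}" using A(1,3) by (simp_all add: PiE_iff)
  show "\<alpha> = \<beta>"
  proof (rule extensionalityI[OF E])
    fix x assume x: "x \<in> {0..t}"
    show "\<alpha> x = \<beta> x"
    proof (cases "x = 0")
      case True then show ?thesis using A by simp
    next
      case False
      then have x1: "x \<in> {1..t}" using x by auto
      have ax: "\<alpha> x \<in> {0..t}" "\<beta> x \<in> {0..t}" using A(1,3) x by auto
      have e1: "toM t \<alpha> x y = 1 \<longleftrightarrow> toM t \<beta> x y = 1" for y using e by simp
      show ?thesis
      proof (cases "\<alpha> x = 0")
        case True
        show ?thesis
        proof (rule ccontr)
          assume "\<alpha> x \<noteq> \<beta> x"
          then have "\<beta> x \<in> {1..t}" using True ax by auto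
          then have "toM t \<beta> x (\<beta> x) = 1" unfolding toM_one using x1 by simp
          then have "toM t \<alpha> x (\<beta> x) = 1" using e1 by blast
          then show False using \<open>\<alpha> x \<noteq> \<beta> x\<close> unfolding toM_one by simp
        qed
      next
        case False
        then have "\<alpha> x \<in> {1..t}" using ax by auto
        then have "toM t \<alpha> x (\<alpha> x) = 1" unfolding toM_one using x1 by simp
        then have "toM t \<beta> x (\<alpha> x) = 1" using e1 by blast
        then show ?thesis unfolding toM_one by simp
      qed
    qed
  qed
qed

lemma Pt_add_assoc: "Pt_add (Pt_add a b) (Pt_add c d) = Pt_add (Pt_add a c) (Pt_add b d)"
  by (auto simp: Pt_add_def)

lemma Pt_add_car: "a \<in> {0..t} \<Longrightarrow> b \<in> {0..t} \<Longrightarrow> Pt_add a b \<in> {0..t}"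
  by (auto simp: Pt_add_def)


lemma End0_D:
  assumes "\<alpha> \<in> End0_Pt t"
  shows "\<alpha> \<in> {0..t} \<rightarrow>\<^sub>E {0..t}" "\<alpha> 0 = 0"
    "\<And>a b. a \<in> {0..t} \<Longrightarrow> b \<in> {0..t} \<Longrightarrow> \<alpha> (Pt_add a b) = Pt_add (\<alpha> a) (\<alpha> b)"
  using assms by (auto simp: End0_Pt_def End_Pt_def Pt_carrier_def)

lemma End0_I:
  assumes "\<alpha> \<in> {0..t} \<rightarrow>\<^sub>E {0..t}" "\<alpha> 0 = 0"
    "\<And>a b. a \<in> {0..t} \<Longrightarrow> b \<in> {0..t} \<Longrightarrow> \<alpha> (Pt_add a b) = Pt_add (\<alpha> a) (\<alpha> b)"
  shows "\<alpha> \<in> End0_Pt t"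
  using assms by (auto simp: End0_Pt_def End_Pt_def Pt_carrier_def)

lemma add_closed:
  assumes a: "\<alpha> \<in> End0_Pt t" "\<beta> \<in> End0_Pt t"
  shows "End_add t \<alpha> \<beta> \<in> End0_Pt t"
proof (rule End0_I)
  note A = End0_D[OF a(1)] and B = End0_D[OF a(2)]
  show "End_add t \<alpha> \<beta> \<in> {0..t} \<rightarrow>\<^sub>E {0..t}"
    unfolding End_add_def Pt_carrier_def
  proof (rule restrict_PiE_iff[THEN iffD2], intro ballI)
    fix x assume x: "x \<in> {0..t}"
    have "\<alpha> x \<in> {0..t}" "\<beta> x \<in> {0..t}" using A(1) B(1) x by auto
    then show "Pt_add (\<alpha> x) (\<beta> x) \<in> {0..t}" by (rule Pt_add_car)
  qed
  show "End_add t \<alpha> \<beta> 0 = 0" using A(2) B(2) by (simp add: End_add_def Pt_carrier_def Pt_add_def)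
  fix a b assume ab: "a \<in> {0..t}" "b \<in> {0..t}"
  have "Pt_add a b \<in> {0..t}" using ab by (rule Pt_add_car)
  then have "End_add t \<alpha> \<beta> (Pt_add a b) = Pt_add (\<alpha> (Pt_add a b)) (\<beta> (Pt_add a b))"
    by (simp add: End_add_def Pt_carrier_def)
  also have "\<dots> = Pt_add (Pt_add (\<alpha> a) (\<alpha> b)) (Pt_add (\<beta> a) (\<beta> b))"
    using A(3)[OF ab] B(3)[OF ab] by simp
  also have "\<dots> = Pt_add (Pt_add (\<alpha> a) (\<beta> a)) (Pt_add (\<alpha> b) (\<beta> b))"
    by (rule Pt_add_assoc)
  also have "\<dots> = Pt_add (End_add t \<alpha> \<beta> a) (End_add t \<alpha> \<beta> b)"
    using ab by (simp add: End_add_def Pt_carrier_def)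
  finally show "End_add t \<alpha> \<beta> (Pt_add a b) = Pt_add (End_add t \<alpha> \<beta> a) (End_add t \<alpha> \<beta> b)" .
qed

lemma mult_closed:
  assumes a: "\<alpha> \<in> End0_Pt t" "\<beta> \<in> End0_Pt t"
  shows "End_mult t \<alpha> \<beta> \<in> End0_Pt t"
proof (rule End0_I)
  note A = End0_D[OF a(1)] and B = End0_D[OF a(2)]
  show "End_mult t \<alpha> \<beta> \<in> {0..t} \<rightarrow>\<^sub>E {0..t}"
    unfolding End_mult_def Pt_carrier_def
  proof (rule restrict_PiE_iff[THEN iffD2], intro ballI)
    fix x assume x: "x \<in> {0..t}"
    have "\<alpha> x \<in> {0..t}" using A(1) x by auto
    then show "\<beta> (\<alpha> x) \<in> {0..t}" using B(1) by auto
  qed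
  show "End_mult t \<alpha> \<beta> 0 = 0" using A(2) B(2) by (simp add: End_mult_def Pt_carrier_def)
  fix a b assume ab: "a \<in> {0..t}" "b \<in> {0..t}"
  have "Pt_add a b \<in> {0..t}" using ab by (rule Pt_add_car)
  then have "End_mult t \<alpha> \<beta> (Pt_add a b) = \<beta> (\<alpha> (Pt_add a b))"
    by (simp add: End_mult_def Pt_carrier_def)
  also have "\<dots> = \<beta> (Pt_add (\<alpha> a) (\<alpha> b))"
    using A(3)[OF ab] by simp
  also have "\<dots> = Pt_add (\<beta> (\<alpha> a)) (\<beta> (\<alpha> b))"
    using A(1) ab by (intro B(3)) auto
  also have "\<dots> = Pt_add (End_mult t \<alpha> \<beta> a) (End_mult t \<alpha> \<beta> b)"
    using ab by (simp add: End_mult_def Pt_carrier_def)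
  finally show "End_mult t \<alpha> \<beta> (Pt_add a b) = Pt_add (End_mult t \<alpha> \<beta> a) (End_mult t \<alpha> \<beta> b)" .
qed

lemma toM_bij: "bij_betw (toM t) (End0_Pt t) (rook t)"
proof (rule bij_betw_imageI[OF toM_inj])
  show "toM t ` End0_Pt t = rook t"
  proof
    show "toM t ` End0_Pt t \<subseteq> rook t" using toM_rook by blast
    show "rook t \<subseteq> toM t ` End0_Pt t"
    proof
      fix M assume M: "M \<in> rook t"
      then have "M = toM t (ofM t M)" by (simp add: toM_ofM)
      then show "M \<in> toM t ` End0_Pt t" using ofM_End0[OF M] by blast
    qed
  qed
qed

lemma hom_add:
  assumes a: "\<alpha> \<in> End0_Pt t" "\<beta> \<in> End0_Pt t"
  shows "toM t (End_add t \<alpha> \<beta>) = rook_add (toM t \<alpha>) (toM t \<beta>)"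
proof (intro ext)
  fix i j
  show "toM t (End_add t \<alpha> \<beta>) i j = rook_add (toM t \<alpha>) (toM t \<beta>) i j"
  proof (cases "i \<in> {1..t} \<and> j \<in> {1..t}")
    case True
    then have "End_add t \<alpha> \<beta> i = Pt_add (\<alpha> i) (\<beta> i)" by (simp add: End_add_def Pt_carrier_def)
    then show ?thesis using True by (simp add: toM_def rook_add_def Pt_add_def)
  next
    case False
    then show ?thesis by (auto simp: toM_def rook_add_def)
  qed
qed

lemma hom_mult:
  assumes a: "\<alpha> \<in> End0_Pt t" "\<beta> \<in> End0_Pt t"
  shows "toM t (End_mult t \<alpha> \<beta>) = rook_mult t (toM t \<alpha>) (toM t \<beta>)"
proof (intro ext)
  fix i j
  note A = End0_D[OF a(1)] and B = End0_D[OF a(2)]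
  have "rook_mult t (toM t \<alpha>) (toM t \<beta>) i j =
        (\<Sum>k\<in>{1..t}. if \<alpha> i = k then (if i \<in> {1..t} then toM t \<beta> k j else 0) else 0)"
    unfolding rook_mult_def by (rule sum.cong) (auto simp: toM_def)
  also have "\<dots> = (if \<alpha> i \<in> {1..t} then (if i \<in> {1..t} then toM t \<beta> (\<alpha> i) j else 0) else 0)"
    by (rule sum.delta') simp
  also have "\<dots> = toM t (End_mult t \<alpha> \<beta>) i j"
  proof (cases "i \<in> {1..t}")
    case True
    then have e: "End_mult t \<alpha> \<beta> i = \<beta> (\<alpha> i)" by (simp add: End_mult_def Pt_carrier_def)
    show ?thesis
    proof (cases "\<alpha> i = 0")
      case True then show ?thesis using e B(2) by (simp add: toM_def)
    next
      case False
      have "\<alpha> i \<in> {0..t}" using A(1) \<open>i \<in> {1..t}\<close> by auto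
      then have "\<alpha> i \<in> {1..t}" using False by auto
      then show ?thesis using e True by (simp add: toM_def)
    qed
  next
    case False then show ?thesis by (auto simp: toM_def)
  qed
  finally show "toM t (End_mult t \<alpha> \<beta>) i j = rook_mult t (toM t \<alpha>) (toM t \<beta>) i j" by simp
qed

theorem proposition3p9:
  fixes t :: nat
  assumes "t \<ge> 2"
  shows "End0_Pt t \<subseteq> End_Pt t
    \<and> (\<forall>\<alpha>\<in>End0_Pt t. \<forall>\<beta>\<in>End0_Pt t.
          End_add t \<alpha> \<beta> \<in> End0_Pt t \<and> End_mult t \<alpha> \<beta> \<in> End0_Pt t)
    \<and> (\<exists>f. bij_betw f (End0_Pt t) (rook t)
          \<and> (\<forall>\<alpha>\<in>End0_Pt t. \<forall>\<beta>\<in>End0_Pt t.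
               f (End_add t \<alpha> \<beta>) = rook_add (f \<alpha>) (f \<beta>)
             \<and> f (End_mult t \<alpha> \<beta>) = rook_mult t (f \<alpha>) (f \<beta>)))
    \<and> (\<forall>\<alpha>\<in>End_Pt t - End0_Pt t. \<exists>c. \<forall>a\<in>Pt_carrier t. \<alpha> a = c)"
proof (intro conjI)
  show "End0_Pt t \<subseteq> End_Pt t" by (auto simp: End0_Pt_def)
  show "\<forall>\<alpha>\<in>End0_Pt t. \<forall>\<beta>\<in>End0_Pt t.
          End_add t \<alpha> \<beta> \<in> End0_Pt t \<and> End_mult t \<alpha> \<beta> \<in> End0_Pt t"
    by (intro ballI conjI add_closed mult_closed)
  show "\<exists>f. bij_betw f (End0_Pt t) (rook t)
          \<and> (\<forall>\<alpha>\<in>End0_Pt t. \<forall>\<beta>\<in>End0_Pt t.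
               f (End_add t \<alpha> \<beta>) = rook_add (f \<alpha>) (f \<beta>)
             \<and> f (End_mult t \<alpha> \<beta>) = rook_mult t (f \<alpha>) (f \<beta>))"
  proof (intro exI[of _ "toM t"] conjI ballI)
    show "bij_betw (toM t) (End0_Pt t) (rook t)" by (rule toM_bij)
    fix \<alpha> \<beta> assume "\<alpha> \<in> End0_Pt t" "\<beta> \<in> End0_Pt t"
    then show "toM t (End_add t \<alpha> \<beta>) = rook_add (toM t \<alpha>) (toM t \<beta>)"
      "toM t (End_mult t \<alpha> \<beta>) = rook_mult t (toM t \<alpha>) (toM t \<beta>)"
      by (simp_all only: hom_add hom_mult)
  qed
  show "\<forall>\<alpha>\<in>End_Pt t - End0_Pt t. \<exists>c. \<forall>a\<in>Pt_carrier t. \<alpha> a = c"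
  proof
    fix \<alpha> assume a: "\<alpha> \<in> End_Pt t - End0_Pt t"
    then have a1: "\<alpha> \<in> End_Pt t" and a2: "\<alpha> \<notin> End0_Pt t" by simp_all
    have n: "\<alpha> 0 \<noteq> 0" using a1 a2 unfolding End0_Pt_def by simp
    have H: "\<forall>a\<in>Pt_carrier t. \<forall>b\<in>Pt_carrier t. \<alpha> (Pt_add a b) = Pt_add (\<alpha> a) (\<alpha> b)"
    proof -
      have "\<alpha> \<in> Pt_carrier t \<rightarrow>\<^sub>E Pt_carrier t \<and> (\<forall>a\<in>Pt_carrier t. \<forall>b\<in>Pt_carrier t. \<alpha> (Pt_add a b) = Pt_add (\<alpha> a) (\<alpha> b))"
        using a1 unfolding End_Pt_def by (rule CollectD)
      then show ?thesis by (rule conjunct2)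
    qed
    have "\<alpha> a = \<alpha> 0" if "a \<in> Pt_carrier t" for a
    proof -
      have z: "0 \<in> Pt_carrier t" by (simp add: Pt_carrier_def)
      have e: "\<alpha> (Pt_add a 0) = Pt_add (\<alpha> a) (\<alpha> 0)" using H that z by blast
      show ?thesis
      proof (cases "a = 0")
        case True then show ?thesis by simp
      next
        case False
        then have "Pt_add a 0 = 0" by (simp add: Pt_add_def)
        then have "\<alpha> 0 = Pt_add (\<alpha> a) (\<alpha> 0)" using e by simp
        then show ?thesis using n unfolding Pt_add_def by (metis)
      qed
    qed
    then show "\<exists>c. \<forall>a\<in>Pt_carrier t. \<alpha> a = c" by blast
  qed
qed

end
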